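(* Let $0<q<1$ and $\Sigma\sim\mathrm{Mallows}(\mathbb{Z},q)$. Almost surely, $\Sigma$ has no cycles of infinite length (i.e., every orbit $\{\Sigma^{(k)}(i):k\in\mathbb{Z}\}$, $i\in\mathbb{Z}$, is finite).
   Context: For a finite set $A\subseteq\mathbb{Z}$ and a bijection $\pi:A\to A$, $\mathrm{inv}(\pi)$ is the number of pairs $i<j$ in $A$ with $\pi(i)>\pi(j)$, and $\Pi_A\sim\mathrm{Mallows}(A,q)$ means $\mathbb{P}(\Pi_A=\pi)\propto q^{\mathrm{inv}(\pi)}$ over bijections $\pi$ of $A$. For a bijection $\sigma$ of a set $B\subseteq\mathbb{Z}$ and finite $A\subseteq B$, the pattern $\sigma_A:A\to A$ is defined by $\sigma_A(a)=a_{(i)}$ when $\sigma(a)$ is the $i$-th smallest element of $\sigma[A]$, where $a_{(i)}$ is the $i$-th smallest element of $A$. For $0<q<1$, $\mathrm{Mallows}(\mathbb{Z},q)$ is Gnedin and Olshanski's bi-infinite Mallows measure: the law of a random bijection $\Sigma$ of $\mathbb{Z}$ such that $\Sigma_I\sim\mathrm{Mallows}(I,q)$ for every finite interval of integers $I$, and, with $I_n=\{-n,\dots,n\}$, almost surely for every $i\in\mathbb{Z}$ one has $\Sigma_{I_n}(i)=\Sigma(i)$ for all sufficiently large $n$. *)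

theory Defs
  imports "HOL-Probability.Probability" "HOL-Combinatorics.Permutations"
begin

definition inversions :: "int set \<Rightarrow> (int \<Rightarrow> int) \<Rightarrow> nat" where
  "inversions A \<pi> = card {(i, j). i \<in> A \<and> j \<in> A \<and> i < j \<and> \<pi> i > \<pi> j}"

text \<open>Pattern sigma_A of \<sigma> on a finite set A: sigma_A(a) is the i-th smallest
  element of A (0-based) when \<sigma>(a) is the i-th smallest element of \<sigma>[A];
  outside A it is the identity (so that sigma_A permutes A).\<close>
definition pattern :: "(int \<Rightarrow> int) \<Rightarrow> int set \<Rightarrow> int \<Rightarrow> int" where
  "pattern \<sigma> A a =
     (if a \<in> A then sorted_list_of_set A ! card {b \<in> \<sigma> ` A. b < \<sigma> a} else a)"

definition mallows_prob :: "real \<Rightarrow> int set \<Rightarrow> (int \<Rightarrow> int) \<Rightarrow> real" where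
  "mallows_prob q A \<pi> =
     q ^ inversions A \<pi> / (\<Sum>p\<in>{p. p permutes A}. q ^ inversions A p)"

definition mallows_Z :: "real \<Rightarrow> (int \<Rightarrow> int) measure \<Rightarrow> bool" where
  "mallows_Z q P \<longleftrightarrow>
     prob_space P \<and>
     sets P = sets (PiM UNIV (\<lambda>_. count_space (UNIV :: int set))) \<and>
     (AE \<sigma> in P. bij \<sigma>) \<and>
     (\<forall>a b :: int. \<forall>\<pi>. \<pi> permutes {a..b} \<longrightarrow>
        measure P {\<sigma> \<in> space P. pattern \<sigma> {a..b} = \<pi>} = mallows_prob q {a..b} \<pi>) \<and>
     (AE \<sigma> in P. \<forall>i. \<exists>N::nat. \<forall>n\<ge>N.
        pattern \<sigma> {- int n..int n} i = \<sigma> i)"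

definition orbit_Z :: "(int \<Rightarrow> int) \<Rightarrow> int \<Rightarrow> int set" where
  "orbit_Z \<sigma> i = {(\<sigma> ^^ n) i | n. True} \<union> {(inv \<sigma> ^^ n) i | n. True}"

end

theory Submission
  imports Defs
begin


lemma perm_bij: "\<pi> permutes A \<Longrightarrow> bij_betw \<pi> A A"
  by (rule permutes_imp_bij)

lemma rank_card:
  assumes p: "\<pi> permutes {a..b::int}" and v: "v \<in> {a..b}"
  shows "card {y\<in>{a..b}. \<pi> y < v} = nat (v - a)"
proof -
  have bb: "bij_betw \<pi> {a..b} {a..b}" using p by (rule permutes_imp_bij)
  have im: "\<pi> ` {y\<in>{a..b}. \<pi> y < v} = {w\<in>{a..b}. w < v}"
  proof
    show "\<pi> ` {y\<in>{a..b}. \<pi> y < v} \<subseteq> {w\<in>{a..b}. w < v}"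
      using bb by (auto simp: bij_betw_def)
    show "{w\<in>{a..b}. w < v} \<subseteq> \<pi> ` {y\<in>{a..b}. \<pi> y < v}"
    proof
      fix w assume w: "w \<in> {w\<in>{a..b}. w < v}"
      have "w \<in> \<pi> ` {a..b}" using bb w by (auto simp: bij_betw_def)
      then obtain y where "y \<in> {a..b}" "w = \<pi> y" by auto
      then show "w \<in> \<pi> ` {y\<in>{a..b}. \<pi> y < v}" using w by auto
    qed
  qed
  have "bij_betw \<pi> {y\<in>{a..b}. \<pi> y < v} {w\<in>{a..b}. w < v}"
    by (rule bij_betw_subset[OF bb _ im]) auto
  then have "card {y\<in>{a..b}. \<pi> y < v} = card {w\<in>{a..b}. w < v}"
    by (rule bij_betw_same_card)
  also have "{w\<in>{a..b}. w < v} = {a..v-1}" using v by auto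
  finally show ?thesis by simp
qed

lemma perm_val:
  assumes p: "\<pi> permutes {a..b::int}" and x: "x \<in> {a..b}"
  shows "\<pi> x = a + int (card {y\<in>{a..b}. \<pi> y < \<pi> x})"
proof -
  have "\<pi> x \<in> {a..b}" using permutes_in_image[OF p] x by blast
  then have "card {y\<in>{a..b}. \<pi> y < \<pi> x} = nat (\<pi> x - a)" using rank_card[OF p] by blast
  then show ?thesis using \<open>\<pi> x \<in> {a..b}\<close> by simp
qed

definition lcode :: "int set \<Rightarrow> (int \<Rightarrow> int) \<Rightarrow> int \<Rightarrow> nat" where
  "lcode A \<pi> = restrict (\<lambda>j. card {i\<in>A. i < j \<and> \<pi> j < \<pi> i}) A"

definition codes :: "int \<Rightarrow> int \<Rightarrow> (int \<Rightarrow> nat) set" where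
  "codes a b = PiE {a..b} (\<lambda>j. {0..nat (j - a)})"

lemma lcode_in:
  assumes "\<pi> permutes {a..b}"
  shows "lcode {a..b} \<pi> \<in> codes a b"
proof -
  have "card {i\<in>{a..b}. i < j \<and> \<pi> j < \<pi> i} \<le> nat (j - a)" if "j \<in> {a..b}" for j
  proof -
    have "card {i\<in>{a..b}. i < j \<and> \<pi> j < \<pi> i} \<le> card {a..<j}"
      by (rule card_mono) auto
    then show ?thesis by simp
  qed
  then show ?thesis unfolding lcode_def codes_def by auto
qed

lemma upset_eq:
  fixes U V :: "'a set"
  assumes "finite U" "finite V" "card U = card V"
    and "\<And>x y. x \<in> U \<Longrightarrow> y \<in> V \<Longrightarrow> x \<notin> V \<Longrightarrow> y \<notin> U \<Longrightarrow> False"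
  shows "U = V"
proof -
  have "U \<subseteq> V \<or> V \<subseteq> U" using assms(4) by blast
  then show ?thesis using assms(1-3) card_subset_eq by metis
qed

lemma lcode_inj_order:
  assumes p: "\<pi> permutes {a..b}" and p': "\<pi>' permutes {a..b}"
    and eq: "lcode {a..b} \<pi> = lcode {a..b} \<pi>'"
  shows "\<forall>x\<in>{a..b}. \<forall>y\<in>{a..b}. x \<le> a + int n \<longrightarrow> y \<le> a + int n \<longrightarrow> (\<pi> x < \<pi> y \<longleftrightarrow> \<pi>' x < \<pi>' y)"
proof (induction n)
  have inj: "inj \<pi>" "inj \<pi>'" using p p' by (auto simp: permutes_inj)
  case 0
  then show ?case using inj by (auto simp: inj_eq)
next
  case (Suc n)
  have inj: "inj \<pi>" "inj \<pi>'" using p p' by (auto simp: permutes_inj)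
  define j where "j = a + int (Suc n)"
  have key: "\<pi> j < \<pi> x \<longleftrightarrow> \<pi>' j < \<pi>' x" if x: "x \<in> {a..b}" "x < j" and j: "j \<in> {a..b}" for x
  proof -
    define U where "U = {i\<in>{a..b}. i < j \<and> \<pi> j < \<pi> i}"
    define V where "V = {i\<in>{a..b}. i < j \<and> \<pi>' j < \<pi>' i}"
    have cUV: "card U = card V" using eq j unfolding lcode_def U_def V_def
      by (metis (no_types, lifting) restrict_apply')
    have IH: "\<pi> u < \<pi> w \<longleftrightarrow> \<pi>' u < \<pi>' w" if "u \<in> {a..b}" "w \<in> {a..b}" "u < j" "w < j" for u w
      using Suc.IH that unfolding j_def by auto
    have "U = V"
    proof (rule upset_eq)
      show "finite U" unfolding U_def by (rule finite_subset[of _ "{a..b}"]) auto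
      show "finite V" unfolding V_def by (rule finite_subset[of _ "{a..b}"]) auto
      show "card U = card V" by (rule cUV)
      fix u w assume u: "u \<in> U" and w: "w \<in> V" and uV: "u \<notin> V" and wU: "w \<notin> U"
      have uw: "u \<in> {a..b}" "w \<in> {a..b}" "u < j" "w < j" using u w unfolding U_def V_def by auto
      have "u \<noteq> w" using u uV w wU by auto
      then have "\<pi> u \<noteq> \<pi> w" using inj by (auto simp: inj_eq)
      show False
      proof (cases "\<pi> u < \<pi> w")
        case True
        then show False using u wU uw unfolding U_def by auto
      next
        case False
        then have "\<pi> w < \<pi> u" using \<open>\<pi> u \<noteq> \<pi> w\<close> by auto
        then have "\<pi>' w < \<pi>' u" using IH uw by auto
        then show False using w uV uw unfolding V_def by auto
      qed
    qed
    then show ?thesis using x unfolding U_def V_def by blast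
  qed
  show ?case
  proof (intro ballI impI)
    fix x y assume x: "x \<in> {a..b}" and y: "y \<in> {a..b}" and xl: "x \<le> a + int (Suc n)" and yl: "y \<le> a + int (Suc n)"
    show "\<pi> x < \<pi> y \<longleftrightarrow> \<pi>' x < \<pi>' y"
    proof (cases "x = j \<or> y = j")
      case False
      then show ?thesis using Suc.IH x y xl yl unfolding j_def by auto
    next
      case True
      show ?thesis
      proof (cases "x = y")
        case True then show ?thesis by simp
      next
        case False
        have nx: "\<pi> x \<noteq> \<pi> y" "\<pi>' x \<noteq> \<pi>' y" using False inj by (auto simp: inj_eq)
        show ?thesis
        proof (cases "x = j")
          case True
          then have "y < j" using False yl unfolding j_def by auto
          then show ?thesis using key[of y] x y True by auto
        next
          case False
          then have yj: "y = j" using \<open>x = j \<or> y = j\<close> by auto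
          then have "x < j" using False xl unfolding j_def by auto
          then show ?thesis using key[of x] x y yj nx by auto
        qed
      qed
    qed
  qed
qed

lemma lcode_inj: "inj_on (lcode {a..b}) {\<pi>. \<pi> permutes {a..b}}"
proof (rule inj_onI)
  fix \<pi> \<pi>' assume p: "\<pi> \<in> {\<pi>. \<pi> permutes {a..b}}" and p': "\<pi>' \<in> {\<pi>. \<pi> permutes {a..b}}"
    and eq: "lcode {a..b} \<pi> = lcode {a..b} \<pi>'"
  have p: "\<pi> permutes {a..b}" and p': "\<pi>' permutes {a..b}" using p p' by auto
  have ord: "\<pi> x < \<pi> y \<longleftrightarrow> \<pi>' x < \<pi>' y" if "x \<in> {a..b}" "y \<in> {a..b}" for x y
    using lcode_inj_order[OF p p' eq, of "nat (b - a)"] that by auto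
  show "\<pi> = \<pi>'"
  proof
    fix x show "\<pi> x = \<pi>' x"
    proof (cases "x \<in> {a..b}")
      case True
      have "{y\<in>{a..b}. \<pi> y < \<pi> x} = {y\<in>{a..b}. \<pi>' y < \<pi>' x}" using ord True by auto
      then show ?thesis using perm_val[OF p True] perm_val[OF p' True] by simp
    next
      case False
      then show ?thesis using p p' by (simp add: permutes_not_in)
    qed
  qed
qed

lemma prod_codes_fact: "(\<Prod>j\<in>{a..a + int n - 1}. nat (j - a) + 1) = fact n"
proof (induction n)
  case 0 then show ?case by simp
next
  case (Suc n)
  have "{a..a + int (Suc n) - 1} = insert (a + int n) {a..a + int n - 1}" by auto
  then show ?case using Suc by (simp add: algebra_simps)
qed

lemma card_codes: "card (codes a b) = fact (nat (b - a + 1))"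
proof (cases "a \<le> b")
  case True
  have "card (codes a b) = (\<Prod>j\<in>{a..b}. nat (j - a) + 1)"
    unfolding codes_def by (simp add: card_PiE)
  also have "{a..b} = {a..a + int (nat (b - a + 1)) - 1}" using True by auto
  also have "(\<Prod>j\<in>\<dots>. nat (j - a) + 1) = fact (nat (b - a + 1))" by (rule prod_codes_fact)
  finally show ?thesis .
next
  case False
  then show ?thesis unfolding codes_def by simp
qed

lemma lcode_bij: "bij_betw (lcode {a..b}) {\<pi>. \<pi> permutes {a..b}} (codes a b)"
proof -
  have card: "card {\<pi>. \<pi> permutes {a..b}} = fact (nat (b - a + 1))"
    by (rule card_permutations) auto
  have sub: "lcode {a..b} ` {\<pi>. \<pi> permutes {a..b}} \<subseteq> codes a b" using lcode_in by auto
  have "card (lcode {a..b} ` {\<pi>. \<pi> permutes {a..b}}) = card (codes a b)"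
    using card_image[OF lcode_inj] card card_codes by simp
  moreover have "finite (codes a b)" unfolding codes_def by (intro finite_PiE) auto
  ultimately have "lcode {a..b} ` {\<pi>. \<pi> permutes {a..b}} = codes a b"
    using sub card_subset_eq by blast
  then show ?thesis using lcode_inj unfolding bij_betw_def by auto
qed

lemma inversions_lcode:
  "inversions A \<pi> = (\<Sum>j\<in>A. lcode A \<pi> j)" if "finite A"
proof -
  have "{(i, j). i \<in> A \<and> j \<in> A \<and> i < j \<and> \<pi> i > \<pi> j} =
        (\<lambda>(j,i). (i,j)) ` (SIGMA j:A. {i\<in>A. i < j \<and> \<pi> j < \<pi> i})" by auto
  moreover have "inj_on (\<lambda>(j,i). (i,j)) (SIGMA j:A. {i\<in>A. i < j \<and> \<pi> j < \<pi> i})"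
    by (auto simp: inj_on_def)
  ultimately have "inversions A \<pi> = card (SIGMA j:A. {i\<in>A. i < j \<and> \<pi> j < \<pi> i})"
    unfolding inversions_def by (simp add: card_image)
  also have "\<dots> = (\<Sum>j\<in>A. card {i\<in>A. i < j \<and> \<pi> j < \<pi> i})"
    using that by (simp add: card_SigmaI)
  also have "\<dots> = (\<Sum>j\<in>A. lcode A \<pi> j)" unfolding lcode_def by simp
  finally show ?thesis .
qed




definition cutp :: "int set \<Rightarrow> (int \<Rightarrow> int) \<Rightarrow> int \<Rightarrow> bool" where
  "cutp A \<pi> s \<longleftrightarrow> (\<forall>x\<in>A. x < s \<longrightarrow> \<pi> x < s)"

lemma finite_inj_self:
  assumes "finite R" "inj_on f R" "f ` R \<subseteq> R"
  shows "f ` R = R"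
  using assms card_image card_subset_eq by metis

lemma nocut_code:
  assumes p: "\<pi> permutes {a..b}" and nc: "\<not> cutp {a..b} \<pi> s"
  shows "\<exists>j\<in>{a..b}. s \<le> j \<and> j - s + 1 \<le> int (lcode {a..b} \<pi> j)"
proof -
  let ?A = "{a..b}"
  have inA: "\<And>y. \<pi> y \<in> ?A \<longleftrightarrow> y \<in> ?A" using permutes_in_image[OF p] by blast
  have inj: "inj \<pi>" using p by (rule permutes_inj)
  obtain x where x: "x \<in> ?A" "x < s" "s \<le> \<pi> x" using nc unfolding cutp_def by auto
  define R where "R = {j\<in>?A. s \<le> j}"
  have finR: "finite R" unfolding R_def by (rule finite_subset[of _ ?A]) auto
  have "\<exists>j\<in>R. \<pi> j < s"
  proof (rule ccontr)
    assume "\<not> ?thesis"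
    then have "\<pi> ` R \<subseteq> R" unfolding R_def using inA by (auto simp: not_less)
    then have "\<pi> ` R = R" using finite_inj_self[OF finR inj_on_subset[OF inj subset_UNIV]] by blast
    moreover have "\<pi> x \<in> R" using x inA unfolding R_def by auto
    ultimately obtain y where "y \<in> R" "\<pi> x = \<pi> y" by auto
    then show False using inj x unfolding R_def by (auto simp: inj_eq)
  qed
  then have Rne: "R \<noteq> {}" by auto
  have "Min (\<pi> ` R) \<in> \<pi> ` R" by (rule Min_in) (use finR Rne in auto)
  then obtain js where js1: "js \<in> R" "\<pi> js = Min (\<pi> ` R)" by auto
  have js2: "\<pi> js \<le> \<pi> j" if "j \<in> R" for j
    unfolding js1(2) by (rule Min_le) (use finR that in auto)
  note js = js1(1) js2
  have pjs: "\<pi> js < s" using js \<open>\<exists>j\<in>R. \<pi> j < s\<close> by (meson le_less_trans)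
  have jsA: "js \<in> ?A" "s \<le> js" using js unfolding R_def by auto
  define S where "S = {i\<in>?A. i < js}"
  define T where "T = {i\<in>?A. \<pi> i < \<pi> js}"
  have TS: "T \<subseteq> S"
  proof
    fix i assume i: "i \<in> T"
    show "i \<in> S"
    proof (rule ccontr)
      assume "i \<notin> S"
      then have "s \<le> i" using i jsA unfolding S_def T_def by auto
      then have "i \<in> R" using i unfolding R_def T_def by auto
      then show False using js(2)[of i] i unfolding T_def by auto
    qed
  qed
  have cS: "card S = nat (js - a)"
  proof -
    have "S = {a..js - 1}" using jsA unfolding S_def by auto
    then show ?thesis by simp
  qed
  have cT: "card T = nat (\<pi> js - a)" unfolding T_def by (rule rank_card[OF p]) (use inA jsA in auto)
  have eq: "{i\<in>?A. i < js \<and> \<pi> js < \<pi> i} = S - T"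
  proof -
    have ne: "\<pi> i \<noteq> \<pi> js" if "i \<in> S" for i
    proof
      assume "\<pi> i = \<pi> js" then have "i = js" using inj by (simp add: inj_eq)
      then show False using that unfolding S_def by simp
    qed
    show ?thesis
    proof (intro equalityI subsetI)
      fix i assume "i \<in> {i\<in>?A. i < js \<and> \<pi> js < \<pi> i}"
      then show "i \<in> S - T" unfolding S_def T_def by auto
    next
      fix i assume i: "i \<in> S - T"
      then have "\<pi> i \<noteq> \<pi> js" using ne by auto
      then show "i \<in> {i\<in>?A. i < js \<and> \<pi> js < \<pi> i}" using i unfolding S_def T_def by auto
    qed
  qed
  have "lcode ?A \<pi> js = card (S - T)" unfolding lcode_def using jsA eq by simp
  also have "\<dots> = card S - card T"
    by (rule card_Diff_subset[OF _ TS]) (rule finite_subset[of _ ?A], auto simp: T_def)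
  finally have lc: "lcode ?A \<pi> js = card S - card T" .
  have finS: "finite S" unfolding S_def by (rule finite_subset[of _ ?A]) auto
  have le: "card T \<le> card S" by (rule card_mono[OF finS TS])
  have "int (lcode ?A \<pi> js) = int (card S) - int (card T)" using lc le by (simp add: of_nat_diff)
  moreover have "a \<le> \<pi> js" using inA jsA by auto
  ultimately have "int (lcode ?A \<pi> js) = js - \<pi> js" using jsA cS cT by simp
  then show ?thesis using jsA pjs by force
qed

lemma two_cuts:
  assumes p: "\<pi> permutes {a..b}" and c1: "cutp {a..b} \<pi> s1" and c2: "cutp {a..b} \<pi> s2"
  shows "\<pi> ` {s1..s2-1} \<subseteq> {s1..s2-1}"
proof
  fix y assume "y \<in> \<pi> ` {s1..s2-1}"
  then obtain x where x: "x \<in> {s1..s2-1}" "y = \<pi> x" by auto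
  let ?A = "{a..b}"
  have inA: "\<And>y. \<pi> y \<in> ?A \<longleftrightarrow> y \<in> ?A" using permutes_in_image[OF p] by blast
  have inj: "inj \<pi>" using p by (rule permutes_inj)
  show "y \<in> {s1..s2-1}"
  proof (cases "x \<in> ?A")
    case False
    then show ?thesis using x p by (simp add: permutes_not_in)
  next
    case True
    define L where "L = {z\<in>?A. z < s1}"
    have "\<pi> ` L \<subseteq> L" using c1 inA unfolding cutp_def L_def by auto
    moreover have "finite L" unfolding L_def by (rule finite_subset[of _ ?A]) auto
    ultimately have L: "\<pi> ` L = L" using finite_inj_self[OF _ inj_on_subset[OF inj subset_UNIV]] by blast
    have "s1 \<le> \<pi> x"
    proof (rule ccontr)
      assume "\<not> s1 \<le> \<pi> x"
      then have "\<pi> x \<in> L" using True inA unfolding L_def by auto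
      then obtain z where "z \<in> L" "\<pi> x = \<pi> z" using L by (metis imageE)
      then show False using inj x unfolding L_def by (auto simp: inj_eq)
    qed
    moreover have "\<pi> x < s2" using c2 True x unfolding cutp_def by auto
    ultimately show ?thesis using x by auto
  qed
qed




definition PrG :: "int set \<Rightarrow> (int \<Rightarrow> nat set) \<Rightarrow> (int \<Rightarrow> nat \<Rightarrow> real) \<Rightarrow> ((int \<Rightarrow> nat) \<Rightarrow> bool) \<Rightarrow> real" where
  "PrG I X w Q = (\<Sum>c\<in>PiE I X. of_bool (Q c) * (\<Prod>j\<in>I. w j (c j)))"

definition wok :: "int set \<Rightarrow> (int \<Rightarrow> nat set) \<Rightarrow> (int \<Rightarrow> nat \<Rightarrow> real) \<Rightarrow> bool" where
  "wok I X w \<longleftrightarrow> finite I \<and> (\<forall>j\<in>I. finite (X j)) \<and> (\<forall>j\<in>I. \<forall>r. 0 \<le> w j r) \<and> (\<forall>j\<in>I. sum (w j) (X j) = 1)"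

definition dep :: "int set \<Rightarrow> ((int \<Rightarrow> nat) \<Rightarrow> bool) \<Rightarrow> bool" where
  "dep B Q \<longleftrightarrow> (\<forall>c c'. (\<forall>j\<in>B. c j = c' j) \<longrightarrow> Q c = Q c')"

lemma PrG_nonneg: "wok I X w \<Longrightarrow> 0 \<le> PrG I X w Q"
  unfolding PrG_def wok_def
  by (intro sum_nonneg mult_nonneg_nonneg prod_nonneg) auto

lemma sum_prod_one:
  assumes "wok I X w" "J \<subseteq> I"
  shows "(\<Sum>c\<in>PiE J X. \<Prod>j\<in>J. w j (c j)) = 1"
proof -
  have fin: "finite J" using assms finite_subset unfolding wok_def by blast
  have "(\<Sum>c\<in>PiE J X. \<Prod>j\<in>J. w j (c j)) = (\<Prod>j\<in>J. \<Sum>r\<in>X j. w j r)"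
    using assms fin by (intro prod_sum_PiE[symmetric]) (auto simp: wok_def)
  also have "\<dots> = 1" using assms by (intro prod.neutral) (auto simp: wok_def)
  finally show ?thesis .
qed

lemma PrG_True: "wok I X w \<Longrightarrow> PrG I X w (\<lambda>_. True) = 1"
  unfolding PrG_def using sum_prod_one[of I X w I] by simp

lemma PrG_mono:
  assumes "wok I X w" "\<And>c. c \<in> PiE I X \<Longrightarrow> Q c \<Longrightarrow> R c"
  shows "PrG I X w Q \<le> PrG I X w R"
  unfolding PrG_def using assms
  by (intro sum_mono mult_right_mono prod_nonneg) (auto simp: wok_def)

lemma PrG_disj:
  assumes "wok I X w"
  shows "PrG I X w (\<lambda>c. Q c \<or> R c) \<le> PrG I X w Q + PrG I X w R"
proof -
  have "PrG I X w (\<lambda>c. Q c \<or> R c) \<le> (\<Sum>c\<in>PiE I X. of_bool (Q c) * (\<Prod>j\<in>I. w j (c j)) + of_bool (R c) * (\<Prod>j\<in>I. w j (c j)))"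
    unfolding PrG_def
  proof (intro sum_mono)
    fix c assume "c \<in> PiE I X"
    have "0 \<le> (\<Prod>j\<in>I. w j (c j))" using assms by (intro prod_nonneg) (auto simp: wok_def)
    then show "of_bool (Q c \<or> R c) * (\<Prod>j\<in>I. w j (c j)) \<le> of_bool (Q c) * (\<Prod>j\<in>I. w j (c j)) + of_bool (R c) * (\<Prod>j\<in>I. w j (c j))"
      by auto
  qed
  also have "\<dots> = PrG I X w Q + PrG I X w R" unfolding PrG_def by (simp add: sum.distrib)
  finally show ?thesis .
qed

lemma PrG_ex:
  assumes "wok I X w" "finite F"
  shows "PrG I X w (\<lambda>c. \<exists>k\<in>F. Q k c) \<le> (\<Sum>k\<in>F. PrG I X w (Q k))"
  using assms(2)
proof (induction F rule: finite_induct)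
  case empty
  then show ?case by (simp add: PrG_def)
next
  case (insert x F)
  have "PrG I X w (\<lambda>c. \<exists>k\<in>insert x F. Q k c) = PrG I X w (\<lambda>c. Q x c \<or> (\<exists>k\<in>F. Q k c))" by simp
  also have "\<dots> \<le> PrG I X w (Q x) + PrG I X w (\<lambda>c. \<exists>k\<in>F. Q k c)" by (rule PrG_disj[OF assms(1)])
  also have "\<dots> \<le> PrG I X w (Q x) + (\<Sum>k\<in>F. PrG I X w (Q k))" using insert by simp
  finally show ?case using insert by simp
qed

lemma PrG_not:
  assumes "wok I X w"
  shows "PrG I X w (\<lambda>c. \<not> Q c) = 1 - PrG I X w Q"
proof -
  have "PrG I X w (\<lambda>c. \<not> Q c) + PrG I X w Q = PrG I X w (\<lambda>_. True)"
    unfolding PrG_def by (subst sum.distrib[symmetric]) (intro sum.cong, auto)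
  then show ?thesis using PrG_True[OF assms] by simp
qed

lemma PrG_prod:
  assumes ok: "wok I X w" and B: "B \<subseteq> I"
  shows "PrG I X w (\<lambda>c. \<forall>j\<in>B. c j \<in> S j) = (\<Prod>j\<in>B. \<Sum>r\<in>X j. of_bool (r \<in> S j) * w j r)"
proof -
  define g where "g j r = (if j \<in> B then of_bool (r \<in> S j) else (1::real))" for j r
  have fin: "finite I" using ok by (simp add: wok_def)
  have "(\<Prod>j\<in>I. \<Sum>r\<in>X j. g j r * w j r) = (\<Sum>c\<in>PiE I X. \<Prod>j\<in>I. g j (c j) * w j (c j))"
    using ok by (intro prod_sum_PiE) (auto simp: wok_def)
  also have "\<dots> = PrG I X w (\<lambda>c. \<forall>j\<in>B. c j \<in> S j)"
    unfolding PrG_def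
  proof (intro sum.cong refl)
    fix c
    have "(\<Prod>j\<in>I. g j (c j)) = of_bool (\<forall>j\<in>B. c j \<in> S j)"
    proof (cases "\<forall>j\<in>B. c j \<in> S j")
      case True
      then have "(\<Prod>j\<in>I. g j (c j)) = 1" unfolding g_def by (intro prod.neutral) auto
      then show ?thesis using True by simp
    next
      case False
      then obtain j where "j \<in> B" "c j \<notin> S j" by auto
      then have "(\<Prod>j\<in>I. g j (c j)) = 0" using fin B
        by (intro prod_zero fin bexI[of _ j]) (auto simp: g_def)
      then show ?thesis using False by simp
    qed
    then show "(\<Prod>j\<in>I. g j (c j) * w j (c j)) = of_bool (\<forall>j\<in>B. c j \<in> S j) * (\<Prod>j\<in>I. w j (c j))"
      by (simp add: prod.distrib)
  qed
  finally have "PrG I X w (\<lambda>c. \<forall>j\<in>B. c j \<in> S j) = (\<Prod>j\<in>I. \<Sum>r\<in>X j. g j r * w j r)" ..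
  also have "\<dots> = (\<Prod>j\<in>I - B. \<Sum>r\<in>X j. g j r * w j r) * (\<Prod>j\<in>B. \<Sum>r\<in>X j. g j r * w j r)"
    by (rule prod.subset_diff[OF B fin])
  also have "(\<Prod>j\<in>I - B. \<Sum>r\<in>X j. g j r * w j r) = 1"
    using ok by (intro prod.neutral) (auto simp: g_def wok_def)
  also have "(\<Prod>j\<in>B. \<Sum>r\<in>X j. g j r * w j r) = (\<Prod>j\<in>B. \<Sum>r\<in>X j. of_bool (r \<in> S j) * w j r)"
    by (intro prod.cong refl) (simp add: g_def)
  finally show ?thesis by simp
qed

lemma sum_PiE_split:
  fixes F G :: "(int \<Rightarrow> nat) \<Rightarrow> real"
  assumes fin: "finite I" and B: "B \<subseteq> I" and finX: "\<forall>j\<in>I. finite (X j)"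
  shows "(\<Sum>c\<in>PiE I X. F (restrict c B) * G (restrict c (I - B))) =
         (\<Sum>u\<in>PiE B X. F u) * (\<Sum>v\<in>PiE (I - B) X. G v)"
proof -
  have "(\<Sum>u\<in>PiE B X. F u) * (\<Sum>v\<in>PiE (I - B) X. G v) = (\<Sum>(u,v)\<in>PiE B X \<times> PiE (I - B) X. F u * G v)"
    by (simp add: sum_product sum.cartesian_product)
  also have "\<dots> = (\<Sum>c\<in>PiE I X. F (restrict c B) * G (restrict c (I - B)))"
  proof (rule sym, rule sum.reindex_bij_witness[of _ "\<lambda>(u,v) j. if j \<in> B then u j else v j" "\<lambda>c. (restrict c B, restrict c (I - B))"])
    fix c assume c: "c \<in> PiE I X"
    show "(\<lambda>(u, v) j. if j \<in> B then u j else v j) (restrict c B, restrict c (I - B)) = c"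
      using c B by (auto simp: PiE_def extensional_def fun_eq_iff)
    show "(restrict c B, restrict c (I - B)) \<in> PiE B X \<times> PiE (I - B) X"
      using c B by (auto simp: PiE_def extensional_def)
    show "(case (restrict c B, restrict c (I - B)) of (u, v) \<Rightarrow> F u * G v) = F (restrict c B) * G (restrict c (I - B))"
      by simp
  next
    fix uv assume uv: "uv \<in> PiE B X \<times> PiE (I - B) X"
    obtain u v where uv': "uv = (u, v)" by (cases uv)
    show "(restrict ((\<lambda>(u, v) j. if j \<in> B then u j else v j) uv) B, restrict ((\<lambda>(u, v) j. if j \<in> B then u j else v j) uv) (I - B)) = uv"
      using uv B unfolding uv' by (auto simp: PiE_def extensional_def fun_eq_iff)
    show "(\<lambda>(u, v) j. if j \<in> B then u j else v j) uv \<in> PiE I X"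
      using uv B unfolding uv' by (auto simp: PiE_def extensional_def Pi_def)
  qed
  finally show ?thesis ..
qed

lemma PrG_split:
  assumes ok: "wok I X w" and B: "B \<subseteq> I" and dQ: "dep B Q" and dR: "dep (I - B) R"
  shows "PrG I X w (\<lambda>c. Q c \<and> R c) =
    (\<Sum>u\<in>PiE B X. of_bool (Q u) * (\<Prod>j\<in>B. w j (u j))) * (\<Sum>v\<in>PiE (I - B) X. of_bool (R v) * (\<Prod>j\<in>I - B. w j (v j)))"
proof -
  have fin: "finite I" and finX: "\<forall>j\<in>I. finite (X j)" using ok by (auto simp: wok_def)
  define F where "F u = of_bool (Q u) * (\<Prod>j\<in>B. w j (u j))" for u
  define G where "G v = of_bool (R v) * (\<Prod>j\<in>I - B. w j (v j))" for v
  have "PrG I X w (\<lambda>c. Q c \<and> R c) = (\<Sum>c\<in>PiE I X. F (restrict c B) * G (restrict c (I - B)))"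
    unfolding PrG_def
  proof (intro sum.cong refl)
    fix c
    have q: "Q (restrict c B) = Q c" using dQ unfolding dep_def by (metis restrict_apply')
    have r: "R (restrict c (I - B)) = R c" using dR unfolding dep_def by (metis restrict_apply')
    have p1: "(\<Prod>j\<in>B. w j (restrict c B j)) = (\<Prod>j\<in>B. w j (c j))" by (intro prod.cong) auto
    have p2: "(\<Prod>j\<in>I - B. w j (restrict c (I - B) j)) = (\<Prod>j\<in>I - B. w j (c j))" by (intro prod.cong) auto
    have p3: "(\<Prod>j\<in>I. w j (c j)) = (\<Prod>j\<in>I - B. w j (c j)) * (\<Prod>j\<in>B. w j (c j))"
      by (rule prod.subset_diff[OF B fin])
    show "of_bool (Q c \<and> R c) * (\<Prod>j\<in>I. w j (c j)) = F (restrict c B) * G (restrict c (I - B))"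
      unfolding F_def G_def q r p1 p2 p3 by simp
  qed
  also have "\<dots> = (\<Sum>u\<in>PiE B X. F u) * (\<Sum>v\<in>PiE (I - B) X. G v)"
    by (rule sum_PiE_split[OF fin B finX])
  finally show ?thesis unfolding F_def G_def .
qed

lemma PrG_indep:
  assumes ok: "wok I X w" and B: "B \<subseteq> I" and dQ: "dep B Q" and dR: "dep (I - B) R"
  shows "PrG I X w (\<lambda>c. Q c \<and> R c) = PrG I X w Q * PrG I X w R"
proof -
  have dT: "dep J (\<lambda>_. True)" for J unfolding dep_def by simp
  have s1: "(\<Sum>v\<in>PiE (I - B) X. of_bool True * (\<Prod>j\<in>I - B. w j (v j))) = 1"
    using sum_prod_one[OF ok, of "I - B"] by simp
  have s2: "(\<Sum>v\<in>PiE B X. of_bool True * (\<Prod>j\<in>B. w j (v j))) = 1"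
    using sum_prod_one[OF ok B] by simp
  have "PrG I X w Q = PrG I X w (\<lambda>c. Q c \<and> True)" by simp
  also have "\<dots> = (\<Sum>u\<in>PiE B X. of_bool (Q u) * (\<Prod>j\<in>B. w j (u j)))"
    using PrG_split[OF ok B dQ dT] s1 by simp
  finally have hQ: "PrG I X w Q = (\<Sum>u\<in>PiE B X. of_bool (Q u) * (\<Prod>j\<in>B. w j (u j)))" .
  have "PrG I X w R = PrG I X w (\<lambda>c. True \<and> R c)" by simp
  also have "\<dots> = (\<Sum>v\<in>PiE (I - B) X. of_bool (R v) * (\<Prod>j\<in>I - B. w j (v j)))"
    using PrG_split[OF ok B dT dR] s2 by simp
  finally have hR: "PrG I X w R = (\<Sum>v\<in>PiE (I - B) X. of_bool (R v) * (\<Prod>j\<in>I - B. w j (v j)))" .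
  show ?thesis using PrG_split[OF ok B dQ dR] hQ hR by simp
qed




definition tail :: "real \<Rightarrow> int set \<Rightarrow> (int \<Rightarrow> nat set) \<Rightarrow> (int \<Rightarrow> nat \<Rightarrow> real) \<Rightarrow> bool" where
  "tail q I X w \<longleftrightarrow> (\<forall>j\<in>I. \<forall>m. (\<Sum>r\<in>X j. of_bool (m < r) * w j r) \<le> q ^ (m + 1))"

definition nearE :: "int set \<Rightarrow> nat \<Rightarrow> int \<Rightarrow> (int \<Rightarrow> nat) \<Rightarrow> bool" where
  "nearE I K s c \<longleftrightarrow> (\<forall>j\<in>I. s \<le> j \<and> j < s + int K \<longrightarrow> int (c j) \<le> j - s)"

definition nocut :: "int set \<Rightarrow> int set \<Rightarrow> (int \<Rightarrow> nat) \<Rightarrow> bool" where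
  "nocut I W c \<longleftrightarrow> (\<forall>s\<in>W. \<exists>j\<in>I. s \<le> j \<and> j - s + 1 \<le> int (c j))"

lemma geo_bound:
  fixes q :: real
  assumes "0 \<le> q" "q < 1" "finite D"
  shows "(\<Sum>d\<in>D. q ^ d) \<le> 1 / (1 - q)"
proof -
  have "(\<Sum>d\<in>D. q ^ d) \<le> (\<Sum>d. q ^ d)"
    by (rule sum_le_suminf) (use assms in \<open>auto intro: summable_geometric\<close>)
  also have "\<dots> = 1 / (1 - q)" using assms by (intro suminf_geometric) auto
  finally show ?thesis .
qed

lemma PrG_gt:
  assumes ok: "wok I X w" and t: "tail q I X w" and j: "j \<in> I"
  shows "PrG I X w (\<lambda>c. m < c j) \<le> q ^ (m + 1)"
proof -
  have "PrG I X w (\<lambda>c. m < c j) = PrG I X w (\<lambda>c. \<forall>j'\<in>{j}. c j' \<in> {r. m < r})" by simp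
  also have "\<dots> = (\<Prod>j'\<in>{j}. \<Sum>r\<in>X j'. of_bool (r \<in> {r. m < r}) * w j' r)"
    by (rule PrG_prod[OF ok]) (use j in auto)
  also have "\<dots> \<le> q ^ (m + 1)" using t j unfolding tail_def by simp
  finally show ?thesis .
qed

lemma sum_le_part:
  assumes ok: "wok I X w" and t: "tail q I X w" and j: "j \<in> I"
  shows "1 - q ^ (m + 1) \<le> (\<Sum>r\<in>X j. of_bool (r \<le> m) * w j r)"
proof -
  have "(\<Sum>r\<in>X j. of_bool (r \<le> m) * w j r) + (\<Sum>r\<in>X j. of_bool (m < r) * w j r) = (\<Sum>r\<in>X j. w j r)"
    by (subst sum.distrib[symmetric]) (intro sum.cong, auto)
  also have "\<dots> = 1" using ok j unfolding wok_def by auto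
  moreover have "(\<Sum>r\<in>X j. of_bool (m < r) * w j r) \<le> q ^ (m + 1)" using t j unfolding tail_def by blast
  ultimately show ?thesis by linarith
qed

lemma far_bound:
  fixes q :: real
  assumes ok: "wok I X w" and t: "tail q I X w" and q: "0 \<le> q" "q < 1"
  shows "PrG I X w (\<lambda>c. \<exists>j\<in>I. s + int K \<le> j \<and> j - s + 1 \<le> int (c j)) \<le> q ^ (K + 1) / (1 - q)"
proof -
  have fin: "finite I" using ok unfolding wok_def by auto
  define J where "J = {j\<in>I. s + int K \<le> j}"
  have finJ: "finite J" unfolding J_def using fin by auto
  have "PrG I X w (\<lambda>c. \<exists>j\<in>I. s + int K \<le> j \<and> j - s + 1 \<le> int (c j)) = PrG I X w (\<lambda>c. \<exists>j\<in>J. nat (j - s) < c j)"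
    unfolding PrG_def J_def by (intro sum.cong refl arg_cong2[where f="(*)"] arg_cong[where f=of_bool]) auto
  also have "\<dots> \<le> (\<Sum>j\<in>J. PrG I X w (\<lambda>c. nat (j - s) < c j))" by (rule PrG_ex[OF ok finJ])
  also have "\<dots> \<le> (\<Sum>j\<in>J. q ^ (nat (j - s) + 1))"
    by (intro sum_mono PrG_gt[OF ok t]) (auto simp: J_def)
  also have "\<dots> = (\<Sum>j\<in>J. q ^ (K + 1) * q ^ (nat (j - s - int K)))"
  proof (intro sum.cong refl)
    fix j assume "j \<in> J"
    then have "nat (j - s) + 1 = (K + 1) + nat (j - s - int K)" unfolding J_def by auto
    then show "q ^ (nat (j - s) + 1) = q ^ (K + 1) * q ^ nat (j - s - int K)" by (simp add: power_add)
  qed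
  also have "\<dots> = q ^ (K + 1) * (\<Sum>j\<in>J. q ^ (nat (j - s - int K)))" by (simp add: sum_distrib_left)
  also have "(\<Sum>j\<in>J. q ^ (nat (j - s - int K))) = (\<Sum>d\<in>(\<lambda>j. nat (j - s - int K)) ` J. q ^ d)"
  proof (rule sum.reindex[symmetric, unfolded comp_def])
    show "inj_on (\<lambda>j. nat (j - s - int K)) J" unfolding J_def by (auto simp: inj_on_def)
  qed
  also have "q ^ (K + 1) * \<dots> \<le> q ^ (K + 1) * (1 / (1 - q))"
    by (intro mult_left_mono geo_bound) (use q finJ in auto)
  finally show ?thesis by simp
qed

lemma weierstrass:
  fixes x :: "nat \<Rightarrow> real"
  assumes "finite D" "\<And>d. d \<in> D \<Longrightarrow> 0 \<le> x d \<and> x d \<le> 1"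
  shows "1 - (\<Sum>d\<in>D. x d) \<le> (\<Prod>d\<in>D. 1 - x d)"
  using assms
proof (induction D rule: finite_induct)
  case empty then show ?case by simp
next
  case (insert a D)
  have IH: "1 - (\<Sum>d\<in>D. x d) \<le> (\<Prod>d\<in>D. 1 - x d)" using insert by auto
  have xa: "0 \<le> x a" "x a \<le> 1" using insert by auto
  have S: "0 \<le> (\<Sum>d\<in>D. x d)" using insert by (intro sum_nonneg) auto
  have "1 - (\<Sum>d\<in>insert a D. x d) = 1 - x a - (\<Sum>d\<in>D. x d)" using insert by simp
  also have "\<dots> \<le> (1 - x a) * (1 - (\<Sum>d\<in>D. x d))" using xa S by (simp add: algebra_simps)
  also have "\<dots> \<le> (1 - x a) * (\<Prod>d\<in>D. 1 - x d)" using IH xa by (intro mult_left_mono) auto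
  also have "\<dots> = (\<Prod>d\<in>insert a D. 1 - x d)" using insert by simp
  finally show ?case .
qed

lemma prod_lower:
  fixes q :: real
  assumes q: "0 \<le> q" "q < 1"
  shows "\<exists>p>0. \<forall>D. finite D \<longrightarrow> p \<le> (\<Prod>d\<in>D. 1 - q ^ (d + 1))"
proof -
  obtain T where T: "q ^ T < (1 - q) / 2" using real_arch_pow_inv[of "(1 - q) / 2" q] q by auto
  define p where "p = (1 - q) ^ T / 2"
  have "p > 0" unfolding p_def using q by simp
  moreover have "p \<le> (\<Prod>d\<in>D. 1 - q ^ (d + 1))" if D: "finite D" for D
  proof -
    define D1 where "D1 = {d\<in>D. d < T}"
    have D1D: "D1 \<subseteq> D" unfolding D1_def by auto
    have fac: "0 \<le> 1 - q ^ (d + 1)" "1 - q ^ (d + 1) \<le> 1" for d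
      using q power_le_one[of q "d + 1"] zero_le_power[of q "d+1"] by linarith+
    have split: "(\<Prod>d\<in>D. 1 - q ^ (d + 1)) = (\<Prod>d\<in>D - D1. 1 - q ^ (d + 1)) * (\<Prod>d\<in>D1. 1 - q ^ (d + 1))"
      by (rule prod.subset_diff[OF D1D D])
    have "(\<Prod>d\<in>D1. 1 - q) \<le> (\<Prod>d\<in>D1. 1 - q ^ (d + 1))"
    proof (intro prod_mono conjI)
      fix d show "0 \<le> 1 - q" using q by simp
      have "q ^ (d + 1) \<le> q ^ 1" using q by (intro power_decreasing) auto
      then show "1 - q \<le> 1 - q ^ (d + 1)" by simp
    qed
    moreover have "(1 - q) ^ T \<le> (\<Prod>d\<in>D1. 1 - q)"
    proof -
      have "card D1 \<le> T"
      proof -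
        have "card D1 \<le> card {..<T}" unfolding D1_def by (intro card_mono) auto
        then show ?thesis by simp
      qed
      then have "(1 - q) ^ T \<le> (1 - q) ^ card D1" using q by (intro power_decreasing) auto
      then show ?thesis by simp
    qed
    ultimately have P1: "(1 - q) ^ T \<le> (\<Prod>d\<in>D1. 1 - q ^ (d + 1))" by linarith
    have "(\<Sum>d\<in>D - D1. q ^ (d + 1)) \<le> 1 / 2"
    proof -
      have "(\<Sum>d\<in>D - D1. q ^ (d + 1)) \<le> (\<Sum>d\<in>D - D1. q ^ T * q ^ (d - T))"
      proof (intro sum_mono)
        fix d assume "d \<in> D - D1"
        then have "T \<le> d" unfolding D1_def by auto
        then have "q ^ (d + 1) \<le> q ^ d" using q by (intro power_decreasing) auto
        also have "q ^ d = q ^ T * q ^ (d - T)" using \<open>T \<le> d\<close> by (simp add: power_add[symmetric])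
        finally show "q ^ (d + 1) \<le> q ^ T * q ^ (d - T)" .
      qed
      also have "\<dots> = q ^ T * (\<Sum>d\<in>D - D1. q ^ (d - T))" by (simp add: sum_distrib_left)
      also have "(\<Sum>d\<in>D - D1. q ^ (d - T)) = (\<Sum>e\<in>(\<lambda>d. d - T) ` (D - D1). q ^ e)"
      proof (rule sum.reindex[symmetric, unfolded comp_def])
        show "inj_on (\<lambda>d. d - T) (D - D1)" unfolding D1_def by (auto simp: inj_on_def)
      qed
      also have "q ^ T * \<dots> \<le> q ^ T * (1 / (1 - q))"
        by (intro mult_left_mono geo_bound) (use q D in auto)
      also have "\<dots> \<le> 1 / 2" using T q by (simp add: field_simps)
      finally show ?thesis .
    qed
    then have P2: "1 / 2 \<le> (\<Prod>d\<in>D - D1. 1 - q ^ (d + 1))"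
      using weierstrass[of "D - D1" "\<lambda>d. q ^ (d + 1)"] D q fac(1) by (auto simp del: power_Suc)
    have "p = (1 / 2) * (1 - q) ^ T" unfolding p_def by simp
    also have "\<dots> \<le> (\<Prod>d\<in>D - D1. 1 - q ^ (d + 1)) * (\<Prod>d\<in>D1. 1 - q ^ (d + 1))"
      by (intro mult_mono P1 P2) (use q fac in \<open>auto intro: prod_nonneg simp del: power_Suc\<close>)
    finally show ?thesis using split by simp
  qed
  ultimately show ?thesis by blast
qed

lemma near_bound:
  fixes q :: real
  assumes ok: "wok I X w" and t: "tail q I X w" and q: "0 \<le> q" "q < 1"
    and p: "\<forall>D. finite D \<longrightarrow> p \<le> (\<Prod>d\<in>D. 1 - q ^ (d + 1))"
  shows "p \<le> PrG I X w (nearE I K s)"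
proof -
  have fin: "finite I" using ok unfolding wok_def by auto
  define B where "B = {j\<in>I. s \<le> j \<and> j < s + int K}"
  have BI: "B \<subseteq> I" unfolding B_def by auto
  have "PrG I X w (nearE I K s) = PrG I X w (\<lambda>c. \<forall>j\<in>B. c j \<in> {r. r \<le> nat (j - s)})"
    unfolding PrG_def nearE_def B_def by (intro sum.cong refl arg_cong2[where f="(*)"] arg_cong[where f=of_bool]) auto
  also have "\<dots> = (\<Prod>j\<in>B. \<Sum>r\<in>X j. of_bool (r \<in> {r. r \<le> nat (j - s)}) * w j r)"
    by (rule PrG_prod[OF ok BI])
  finally have e: "PrG I X w (nearE I K s) = (\<Prod>j\<in>B. \<Sum>r\<in>X j. of_bool (r \<le> nat (j - s)) * w j r)" by simp
  have "(\<Prod>j\<in>B. 1 - q ^ (nat (j - s) + 1)) \<le> (\<Prod>j\<in>B. \<Sum>r\<in>X j. of_bool (r \<le> nat (j - s)) * w j r)"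
  proof (intro prod_mono conjI)
    fix j assume "j \<in> B"
    then show "1 - q ^ (nat (j - s) + 1) \<le> (\<Sum>r\<in>X j. of_bool (r \<le> nat (j - s)) * w j r)"
      using sum_le_part[OF ok t] BI by blast
    show "0 \<le> 1 - q ^ (nat (j - s) + 1)" using q power_le_one[of q "nat (j - s) + 1"] by linarith
  qed
  moreover have "(\<Prod>j\<in>B. 1 - q ^ (nat (j - s) + 1)) = (\<Prod>d\<in>(\<lambda>j. nat (j - s)) ` B. 1 - q ^ (d + 1))"
  proof (rule prod.reindex[symmetric, unfolded comp_def])
    show "inj_on (\<lambda>j. nat (j - s)) B" unfolding B_def by (auto simp: inj_on_def)
  qed
  moreover have "p \<le> (\<Prod>d\<in>(\<lambda>j. nat (j - s)) ` B. 1 - q ^ (d + 1))"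
    using p fin BI by (meson finite_imageI finite_subset)
  ultimately show ?thesis using e by linarith
qed

lemma blocks_bound:
  fixes q :: real
  assumes ok: "wok I X w" and t: "tail q I X w" and q: "0 \<le> q" "q < 1"
    and p: "\<forall>D. finite D \<longrightarrow> p \<le> (\<Prod>d\<in>D. 1 - q ^ (d + 1))"
  shows "PrG I X w (\<lambda>c. \<forall>k<M. \<not> nearE I K (t + int (k * K)) c) \<le> (1 - p) ^ M"
proof (induction M)
  case 0
  then show ?case using PrG_True[OF ok] by simp
next
  case (Suc M)
  define B where "B = {j\<in>I. t + int (M * K) \<le> j \<and> j < t + int (M * K) + int K}"
  have BI: "B \<subseteq> I" unfolding B_def by auto
  have dQ: "dep B (\<lambda>c. \<not> nearE I K (t + int (M * K)) c)"
    unfolding dep_def nearE_def B_def by auto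
  have dR: "dep (I - B) (\<lambda>c. \<forall>k<M. \<not> nearE I K (t + int (k * K)) c)"
    unfolding dep_def
  proof (intro allI impI)
    fix c c' :: "int \<Rightarrow> nat" assume eq: "\<forall>j\<in>I - B. c j = c' j"
    have "nearE I K (t + int (k * K)) c = nearE I K (t + int (k * K)) c'" if k: "k < M" for k
    proof -
      have "int (k * K) + int K \<le> int (M * K)"
      proof -
        have "k * K + K \<le> M * K" using k by (metis Suc_leI mult_Suc mult_le_mono1 add.commute)
        then show ?thesis by linarith
      qed
      then have "\<forall>j\<in>I. t + int (k * K) \<le> j \<and> j < t + int (k * K) + int K \<longrightarrow> c j = c' j"
        using eq unfolding B_def by auto
      then show ?thesis unfolding nearE_def by auto
    qed
    then show "(\<forall>k<M. \<not> nearE I K (t + int (k * K)) c) = (\<forall>k<M. \<not> nearE I K (t + int (k * K)) c')"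
      by auto
  qed
  have "PrG I X w (\<lambda>c. \<forall>k<Suc M. \<not> nearE I K (t + int (k * K)) c) =
        PrG I X w (\<lambda>c. \<not> nearE I K (t + int (M * K)) c \<and> (\<forall>k<M. \<not> nearE I K (t + int (k * K)) c))"
    by (rule arg_cong[where f="PrG I X w"], rule ext) (auto simp: less_Suc_eq)
  also have "\<dots> = PrG I X w (\<lambda>c. \<not> nearE I K (t + int (M * K)) c) * PrG I X w (\<lambda>c. \<forall>k<M. \<not> nearE I K (t + int (k * K)) c)"
    by (rule PrG_indep[OF ok BI dQ dR])
  also have "\<dots> \<le> (1 - p) * (1 - p) ^ M"
  proof (intro mult_mono Suc.IH)
    show "PrG I X w (\<lambda>c. \<not> nearE I K (t + int (M * K)) c) \<le> 1 - p"
      using PrG_not[OF ok, of "nearE I K (t + int (M * K))"] near_bound[OF ok t q p, of K "t + int (M * K)"] by simp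
    show "0 \<le> (1 - p)" using PrG_nonneg[OF ok, of "\<lambda>c. \<not> nearE I K (t + int (M * K)) c"]
        PrG_not[OF ok, of "nearE I K (t + int (M * K))"] near_bound[OF ok t q p, of K "t + int (M * K)"] by linarith
    show "0 \<le> PrG I X w (\<lambda>c. \<forall>k<M. \<not> nearE I K (t + int (k * K)) c)" by (rule PrG_nonneg[OF ok])
  qed
  finally show ?case by simp
qed

lemma nocut_bound:
  fixes q :: real
  assumes ok: "wok I X w" and t: "tail q I X w" and q: "0 \<le> q" "q < 1"
    and p: "\<forall>D. finite D \<longrightarrow> p \<le> (\<Prod>d\<in>D. 1 - q ^ (d + 1))"
  shows "PrG I X w (nocut I {t0..t0 + int (M * K)}) \<le> real M * (q ^ (K + 1) / (1 - q)) + (1 - p) ^ M"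
proof -
  define Far where "Far k c = (\<exists>j\<in>I. (t0 + int (k * K)) + int K \<le> j \<and> j - (t0 + int (k * K)) + 1 \<le> int (c j))" for k c
  have imp: "(\<exists>k\<in>{..<M}. Far k c) \<or> (\<forall>k<M. \<not> nearE I K (t0 + int (k * K)) c)"
    if nc: "nocut I {t0..t0 + int (M * K)} c" for c
  proof (cases "\<forall>k<M. \<not> nearE I K (t0 + int (k * K)) c")
    case True then show ?thesis by simp
  next
    case False
    then obtain k where k: "k < M" "nearE I K (t0 + int (k * K)) c" by auto
    have "k * K \<le> M * K" using k by simp
    then have "int (k * K) \<le> int (M * K)" by (simp only: of_nat_le_iff)
    then have "t0 + int (k * K) \<in> {t0..t0 + int (M * K)}" unfolding atLeastAtMost_iff by linarith
    then obtain j where j: "j \<in> I" "t0 + int (k * K) \<le> j" "j - (t0 + int (k * K)) + 1 \<le> int (c j)"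
      using nc unfolding nocut_def by blast
    have nj: "\<not> j < t0 + int (k * K) + int K" using k(2) j unfolding nearE_def by force
    have "Far k c" unfolding Far_def
      by (rule bexI[of _ j]) (use j nj in \<open>auto simp: not_less\<close>)
    then show ?thesis using k by auto
  qed
  have "PrG I X w (nocut I {t0..t0 + int (M * K)}) \<le> PrG I X w (\<lambda>c. (\<exists>k\<in>{..<M}. Far k c) \<or> (\<forall>k<M. \<not> nearE I K (t0 + int (k * K)) c))"
    by (rule PrG_mono[OF ok]) (use imp in auto)
  also have "\<dots> \<le> PrG I X w (\<lambda>c. \<exists>k\<in>{..<M}. Far k c) + PrG I X w (\<lambda>c. \<forall>k<M. \<not> nearE I K (t0 + int (k * K)) c)"
    by (rule PrG_disj[OF ok])
  also have "\<dots> \<le> (\<Sum>k\<in>{..<M}. PrG I X w (Far k)) + (1 - p) ^ M"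
    by (intro add_mono PrG_ex[OF ok] blocks_bound[OF ok t q p]) auto
  also have "(\<Sum>k\<in>{..<M}. PrG I X w (Far k)) \<le> (\<Sum>k\<in>{..<M}. q ^ (K + 1) / (1 - q))"
    unfolding Far_def by (intro sum_mono far_bound[OF ok t q])
  finally show ?thesis by simp
qed

lemma nocut_small:
  fixes q :: real
  assumes q: "0 \<le> q" "q < 1" and e: "0 < \<epsilon>"
  shows "\<exists>L::nat. \<forall>I X w t0. wok I X w \<longrightarrow> tail q I X w \<longrightarrow> PrG I X w (nocut I {t0..t0 + int L}) \<le> \<epsilon>"
proof -
  obtain p0 where p0: "p0 > 0" "\<forall>D. finite D \<longrightarrow> p0 \<le> (\<Prod>d\<in>D. 1 - q ^ (d + 1))"
    using prod_lower[OF q] by auto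
  define p where "p = min p0 (1/2)"
  have p: "0 < p" "p \<le> 1/2" "\<forall>D. finite D \<longrightarrow> p \<le> (\<Prod>d\<in>D. 1 - q ^ (d + 1))"
    using p0 unfolding p_def by auto
  obtain M where M: "(1 - p) ^ M < \<epsilon> / 2" using real_arch_pow_inv[of "\<epsilon> / 2" "1 - p"] p e by auto
  obtain K where K: "q ^ K < \<epsilon> / 2 * (1 - q) / (real M + 1)"
    using real_arch_pow_inv[of "\<epsilon> / 2 * (1 - q) / (real M + 1)" q] q e by auto
  have "real M * (q ^ (K + 1) / (1 - q)) \<le> \<epsilon> / 2"
  proof -
    have "q ^ (K + 1) \<le> q ^ K" using q by (intro power_decreasing) auto
    then have "real M * (q ^ (K + 1) / (1 - q)) \<le> (real M + 1) * (q ^ K / (1 - q))"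
      using q by (intro mult_mono divide_right_mono) auto
    also have "\<dots> = ((real M + 1) * q ^ K) / (1 - q)" by simp
    also have "\<dots> < \<epsilon> / 2"
    proof -
      have "q ^ K * (real M + 1) < \<epsilon> / 2 * (1 - q)"
        using K by (subst (asm) pos_less_divide_eq) auto
      then show ?thesis using q by (subst pos_divide_less_eq) (auto simp: mult.commute)
    qed
    finally show ?thesis by simp
  qed
  note bd = this
  show ?thesis
  proof (intro exI allI impI)
    fix I X w t0 assume ok: "wok I X w" and t: "tail q I X w"
    have "PrG I X w (nocut I {t0..t0 + int (M * K)}) \<le> real M * (q ^ (K + 1) / (1 - q)) + (1 - p) ^ M"
      by (rule nocut_bound[OF ok t q p(3)])
    then show "PrG I X w (nocut I {t0..t0 + int (M * K)}) \<le> \<epsilon>" using bd M by linarith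
  qed
qed




definition Xa :: "int \<Rightarrow> int \<Rightarrow> nat set" where "Xa a j = {0..nat (j - a)}"
definition Zj :: "real \<Rightarrow> int \<Rightarrow> int \<Rightarrow> real" where "Zj q a j = (\<Sum>r\<in>{0..nat (j - a)}. q ^ r)"
definition wa :: "real \<Rightarrow> int \<Rightarrow> int \<Rightarrow> nat \<Rightarrow> real" where "wa q a j r = q ^ r / Zj q a j"

lemma Zj_ge1: assumes "0 \<le> q" shows "1 \<le> Zj q a j"
proof -
  have "q ^ 0 \<le> (\<Sum>r\<in>{0..nat (j - a)}. q ^ r)"
    by (rule member_le_sum) (use assms in auto)
  then show ?thesis unfolding Zj_def by simp
qed

lemma wok_a: assumes "0 < q" shows "wok {a..b} (Xa a) (wa q a)"
proof -
  have "sum (wa q a j) (Xa a j) = 1" for j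
  proof -
    have "sum (wa q a j) (Xa a j) = (\<Sum>r\<in>{0..nat (j - a)}. q ^ r) / Zj q a j"
      unfolding wa_def Xa_def by (simp add: sum_divide_distrib)
    also have "\<dots> = 1" using Zj_ge1[of q a j] assms unfolding Zj_def by simp
    finally show ?thesis .
  qed
  moreover have "0 \<le> wa q a j r" for j r
    unfolding wa_def using Zj_ge1[of q a j] assms by simp
  ultimately show ?thesis unfolding wok_def by (auto simp: Xa_def)
qed

lemma tail_a: assumes q: "0 < q" "q < 1" shows "tail q {a..b} (Xa a) (wa q a)"
  unfolding tail_def
proof (intro ballI allI)
  fix j m
  define n where "n = nat (j - a)"
  define S where "S = {r\<in>{0..n}. m < r}"
  have Z: "1 \<le> Zj q a j" using Zj_ge1 q by simp
  have "(\<Sum>r\<in>S. q ^ r / Zj q a j) = (\<Sum>r\<in>{0..n}. if m < r then q ^ r / Zj q a j else 0)"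
    unfolding S_def by (rule sum.inter_filter) simp
  also have "\<dots> = (\<Sum>r\<in>Xa a j. of_bool (m < r) * wa q a j r)"
    unfolding Xa_def wa_def n_def by (intro sum.cong refl) auto
  finally have "(\<Sum>r\<in>Xa a j. of_bool (m < r) * wa q a j r) = (\<Sum>r\<in>S. q ^ r) / Zj q a j"
    by (simp add: sum_divide_distrib)
  also have "(\<Sum>r\<in>S. q ^ r) = (\<Sum>r\<in>S. q ^ (m + 1) * q ^ (r - (m + 1)))"
  proof (intro sum.cong refl)
    fix r assume "r \<in> S"
    then have "r = (m + 1) + (r - (m + 1))" by (auto simp: S_def)
    then show "q ^ r = q ^ (m + 1) * q ^ (r - (m + 1))" by (metis power_add)
  qed
  also have "\<dots> = q ^ (m + 1) * (\<Sum>e\<in>(\<lambda>r. r - (m + 1)) ` S. q ^ e)"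
  proof -
    have "inj_on (\<lambda>r. r - (m + 1)) S" unfolding S_def by (auto simp: inj_on_def)
    then show ?thesis by (simp add: sum.reindex sum_distrib_left)
  qed
  also have "\<dots> \<le> q ^ (m + 1) * Zj q a j"
  proof (intro mult_left_mono)
    show "(\<Sum>e\<in>(\<lambda>r. r - (m + 1)) ` S. q ^ e) \<le> Zj q a j"
      unfolding Zj_def n_def[symmetric] by (intro sum_mono2) (use q in \<open>auto simp: S_def\<close>)
  qed (use q in auto)
  finally show "(\<Sum>r\<in>Xa a j. of_bool (m < r) * wa q a j r) \<le> q ^ (m + 1)"
    using Z by (simp add: divide_le_eq)
qed

lemma mallows_key:
  assumes q: "0 < q"
  shows "(\<Sum>\<pi>\<in>{\<pi>. \<pi> permutes {a..b}}. of_bool (Q (lcode {a..b} \<pi>)) * q ^ inversions {a..b} \<pi>)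
       = PrG {a..b} (Xa a) (wa q a) Q * (\<Prod>j\<in>{a..b}. Zj q a j)"
proof -
  let ?A = "{a..b}"
  have "(\<Sum>\<pi>\<in>{\<pi>. \<pi> permutes ?A}. of_bool (Q (lcode ?A \<pi>)) * q ^ inversions ?A \<pi>)
      = (\<Sum>\<pi>\<in>{\<pi>. \<pi> permutes ?A}. (\<lambda>c. of_bool (Q c) * q ^ (\<Sum>j\<in>?A. c j)) (lcode ?A \<pi>))"
    by (intro sum.cong refl) (simp add: inversions_lcode)
  also have "\<dots> = (\<Sum>c\<in>codes a b. of_bool (Q c) * q ^ (\<Sum>j\<in>?A. c j))"
    by (rule sum.reindex_bij_betw[OF lcode_bij])
  also have "\<dots> = (\<Sum>c\<in>codes a b. of_bool (Q c) * (\<Prod>j\<in>?A. wa q a j (c j)) * (\<Prod>j\<in>?A. Zj q a j))"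
  proof (intro sum.cong refl)
    fix c
    have "q ^ (\<Sum>j\<in>?A. c j) = (\<Prod>j\<in>?A. q ^ c j)" by (rule power_sum)
    also have "\<dots> = (\<Prod>j\<in>?A. wa q a j (c j) * Zj q a j)"
    proof (intro prod.cong refl)
      fix j
      have "Zj q a j \<noteq> 0" using Zj_ge1[of q a j] q by linarith
      then show "q ^ c j = wa q a j (c j) * Zj q a j" unfolding wa_def by simp
    qed
    also have "\<dots> = (\<Prod>j\<in>?A. wa q a j (c j)) * (\<Prod>j\<in>?A. Zj q a j)" by (rule prod.distrib)
    finally show "of_bool (Q c) * q ^ (\<Sum>j\<in>?A. c j) = of_bool (Q c) * (\<Prod>j\<in>?A. wa q a j (c j)) * (\<Prod>j\<in>?A. Zj q a j)"
      by simp
  qed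
  also have "\<dots> = PrG ?A (Xa a) (wa q a) Q * (\<Prod>j\<in>?A. Zj q a j)"
    unfolding PrG_def codes_def Xa_def by (simp add: sum_distrib_right)
  finally show ?thesis .
qed

lemma mallows_transfer:
  assumes q: "0 < q"
  shows "(\<Sum>\<pi>\<in>{\<pi>. \<pi> permutes {a..b}}. of_bool (Q (lcode {a..b} \<pi>)) * mallows_prob q {a..b} \<pi>)
       = PrG {a..b} (Xa a) (wa q a) Q"
proof -
  let ?A = "{a..b}"
  let ?Z = "\<Prod>j\<in>?A. Zj q a j"
  have Zpos: "0 < ?Z" using Zj_ge1[of q a] q by (intro prod_pos) (auto intro: less_le_trans[of 0 1])
  have Zs: "(\<Sum>p\<in>{p. p permutes ?A}. q ^ inversions ?A p) = ?Z"
    using mallows_key[OF q, of "\<lambda>_. True" a b] PrG_True[OF wok_a[OF q]] by simp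
  have "(\<Sum>\<pi>\<in>{\<pi>. \<pi> permutes ?A}. of_bool (Q (lcode ?A \<pi>)) * mallows_prob q ?A \<pi>)
      = (\<Sum>\<pi>\<in>{\<pi>. \<pi> permutes ?A}. of_bool (Q (lcode ?A \<pi>)) * q ^ inversions ?A \<pi>) / ?Z"
    unfolding mallows_prob_def Zs by (simp add: sum_divide_distrib)
  also have "\<dots> = (PrG ?A (Xa a) (wa q a) Q * ?Z) / ?Z" by (simp only: mallows_key[OF q])
  also have "\<dots> = PrG ?A (Xa a) (wa q a) Q" by (rule nonzero_mult_div_cancel_right) (use Zpos in linarith)
  finally show ?thesis .
qed

lemma mallows_prob_nonneg: "0 < q \<Longrightarrow> 0 \<le> mallows_prob q A \<pi>"
  unfolding mallows_prob_def by (intro divide_nonneg_nonneg sum_nonneg) auto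

definition goodp :: "int \<Rightarrow> nat \<Rightarrow> (int \<Rightarrow> int) \<Rightarrow> bool" where
  "goodp i N \<pi> \<longleftrightarrow> (\<exists>m k. i - int N \<le> m \<and> m \<le> i \<and> i \<le> k \<and> k \<le> i + int N \<and> \<pi> ` {m..k} \<subseteq> {m..k})"

lemma notgood_nocut:
  assumes p: "\<pi> permutes {a..b}" and ng: "\<not> goodp i N \<pi>"
  shows "nocut {a..b} {i - int N..i} (lcode {a..b} \<pi>) \<or> nocut {a..b} {i + 1..i + 1 + int N} (lcode {a..b} \<pi>)"
proof (rule ccontr)
  assume "\<not> ?thesis"
  then obtain s1 s2 where s1: "s1 \<in> {i - int N..i}" "\<not> (\<exists>j\<in>{a..b}. s1 \<le> j \<and> j - s1 + 1 \<le> int (lcode {a..b} \<pi> j))"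
    and s2: "s2 \<in> {i + 1..i + 1 + int N}" "\<not> (\<exists>j\<in>{a..b}. s2 \<le> j \<and> j - s2 + 1 \<le> int (lcode {a..b} \<pi> j))"
    unfolding nocut_def by blast
  have c1: "cutp {a..b} \<pi> s1" using nocut_code[OF p, of s1] s1 by blast
  have c2: "cutp {a..b} \<pi> s2" using nocut_code[OF p, of s2] s2 by blast
  have "\<pi> ` {s1..s2-1} \<subseteq> {s1..s2-1}" by (rule two_cuts[OF p c1 c2])
  then have "goodp i N \<pi>" unfolding goodp_def using s1(1) s2(1)
    by (intro exI[of _ s1] exI[of _ "s2 - 1"]) auto
  then show False using ng by simp
qed

lemma finite_bad:
  assumes q: "0 < q" "q < 1" and e: "0 < \<epsilon>"
  shows "\<exists>N. \<forall>a b i. (\<Sum>\<pi>\<in>{\<pi>. \<pi> permutes {a..b}}. of_bool (\<not> goodp i N \<pi>) * mallows_prob q {a..b} \<pi>) \<le> \<epsilon>"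
proof -
  obtain L where L: "\<forall>I X w t0. wok I X w \<longrightarrow> tail q I X w \<longrightarrow> PrG I X w (nocut I {t0..t0 + int L}) \<le> \<epsilon> / 2"
    using nocut_small[of q "\<epsilon> / 2"] q e by auto
  show ?thesis
  proof (intro exI allI)
    fix a b i :: int
    let ?A = "{a..b}"
    let ?n1 = "nocut ?A {i - int L..i}"
    let ?n2 = "nocut ?A {i + 1..i + 1 + int L}"
    have ok: "wok ?A (Xa a) (wa q a)" by (rule wok_a) (use q in auto)
    have tl: "tail q ?A (Xa a) (wa q a)" by (rule tail_a) (use q in auto)
    have "(\<Sum>\<pi>\<in>{\<pi>. \<pi> permutes ?A}. of_bool (\<not> goodp i L \<pi>) * mallows_prob q ?A \<pi>)
        \<le> (\<Sum>\<pi>\<in>{\<pi>. \<pi> permutes ?A}. of_bool ((\<lambda>c. ?n1 c \<or> ?n2 c) (lcode ?A \<pi>)) * mallows_prob q ?A \<pi>)"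
    proof (intro sum_mono mult_right_mono)
      fix \<pi> assume "\<pi> \<in> {\<pi>. \<pi> permutes ?A}"
      then show "of_bool (\<not> goodp i L \<pi>) \<le> (of_bool ((\<lambda>c. ?n1 c \<or> ?n2 c) (lcode ?A \<pi>)) :: real)"
        using notgood_nocut[of \<pi> a b i L] by auto
      show "0 \<le> mallows_prob q ?A \<pi>" by (rule mallows_prob_nonneg) (use q in auto)
    qed
    also have "\<dots> = PrG ?A (Xa a) (wa q a) (\<lambda>c. ?n1 c \<or> ?n2 c)" by (rule mallows_transfer) (use q in auto)
    also have "\<dots> \<le> PrG ?A (Xa a) (wa q a) ?n1 + PrG ?A (Xa a) (wa q a) ?n2" by (rule PrG_disj[OF ok])
    also have "\<dots> \<le> \<epsilon> / 2 + \<epsilon> / 2"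
    proof (intro add_mono)
      have "{i - int L..i} = {(i - int L)..(i - int L) + int L}" by simp
      then show "PrG ?A (Xa a) (wa q a) ?n1 \<le> \<epsilon> / 2" using L ok tl by metis
      show "PrG ?A (Xa a) (wa q a) ?n2 \<le> \<epsilon> / 2" using L ok tl by blast
    qed
    finally show "(\<Sum>\<pi>\<in>{\<pi>. \<pi> permutes ?A}. of_bool (\<not> goodp i L \<pi>) * mallows_prob q ?A \<pi>) \<le> \<epsilon>" by simp
  qed
qed




lemma orbit_finite:
  assumes b: "bij \<sigma>" and J: "finite J" "\<sigma> ` J \<subseteq> J" "i \<in> J"
  shows "finite (orbit_Z \<sigma> i)"
proof -
  have inj: "inj \<sigma>" using b by (rule bij_is_inj)
  have im: "\<sigma> ` J = J" using finite_inj_self[OF J(1) inj_on_subset[OF inj subset_UNIV] J(2)] .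
  have iv: "inv \<sigma> ` J \<subseteq> J"
  proof
    fix y assume "y \<in> inv \<sigma> ` J"
    then obtain z where z: "z \<in> J" "y = inv \<sigma> z" by auto
    then obtain x where x: "x \<in> J" "z = \<sigma> x" using im by (metis imageE)
    have "y = x" using z x inv_f_f[OF inj] by simp
    then show "y \<in> J" using x by simp
  qed
  have f1: "(\<sigma> ^^ n) i \<in> J" for n by (induction n) (use J in auto)
  have f2: "(inv \<sigma> ^^ n) i \<in> J" for n by (induction n) (use J iv in auto)
  have "orbit_Z \<sigma> i \<subseteq> J" unfolding orbit_Z_def using f1 f2 by auto
  then show ?thesis using J(1) finite_subset by blast
qed

lemma mp_pos:
  assumes q: "0 < q" and p: "\<pi> permutes A" and A: "finite A"
  shows "0 < mallows_prob q A \<pi>"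
proof -
  have "0 < (\<Sum>p\<in>{p. p permutes A}. q ^ inversions A p)"
  proof (rule sum_pos)
    show "finite {p. p permutes A}" using A by (simp add: finite_permutations)
    have "id permutes A" by simp
    then show "{p. p permutes A} \<noteq> {}" by blast
  qed (use q in auto)
  then show ?thesis unfolding mallows_prob_def using q by simp
qed

lemma real_le_all_inv:
  fixes x :: real
  assumes "0 \<le> x" "\<And>k::nat. x \<le> 1 / (real k + 1)"
  shows "x = 0"
proof (rule ccontr)
  assume "x \<noteq> 0"
  then have "0 < x" using assms by simp
  then obtain n where "inverse (of_nat (Suc n)) < x" using reals_Archimedean by blast
  then show False using assms(2)[of n] by (simp add: inverse_eq_divide add.commute)
qed

theorem main_thm:
  fixes q :: real and P :: "(int \<Rightarrow> int) measure"
  assumes q: "0 < q" "q < 1" and mz: "mallows_Z q P"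
  shows "AE \<sigma> in P. \<forall>i. finite (orbit_Z \<sigma> i)"
proof -
  have ps: "prob_space P"
    and bijAE: "AE \<sigma> in P. bij \<sigma>"
    and marg: "\<And>a b \<pi>. \<pi> permutes {a..b} \<Longrightarrow> measure P {\<sigma> \<in> space P. pattern \<sigma> {a..b} = \<pi>} = mallows_prob q {a..b} \<pi>"
    and convAE: "AE \<sigma> in P. \<forall>i. \<exists>N::nat. \<forall>n\<ge>N. pattern \<sigma> {- int n..int n} i = \<sigma> i"
    using mz unfolding mallows_Z_def by auto
  interpret prob_space P by (rule ps)
  define In where "In n = {- int n..int n}" for n :: nat
  define S where "S n \<pi> = {\<sigma> \<in> space P. pattern \<sigma> (In n) = \<pi>}" for n \<pi>
  have S_meas: "S n \<pi> \<in> sets P" if "\<pi> permutes In n" for n \<pi>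
  proof (rule ccontr)
    assume "S n \<pi> \<notin> sets P"
    then have "measure P (S n \<pi>) = 0" by (rule measure_notin_sets)
    moreover have "measure P (S n \<pi>) = mallows_prob q (In n) \<pi>"
      unfolding S_def In_def by (rule marg) (use that in \<open>simp add: In_def\<close>)
    moreover have "0 < mallows_prob q (In n) \<pi>" by (rule mp_pos) (use q that in \<open>auto simp: In_def\<close>)
    ultimately show False by simp
  qed
  define Gd where "Gd i N n = {\<pi>. \<pi> permutes In n \<and> goodp i N \<pi>}" for i N n
  define C where "C i N n = space P - (\<Union>\<pi>\<in>Gd i N n. S n \<pi>)" for i N n
  have finGd: "finite (Gd i N n)" for i N n
    unfolding Gd_def by (rule finite_subset[of _ "{\<pi>. \<pi> permutes In n}"]) (auto simp: finite_permutations In_def)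
  have UGd_meas: "(\<Union>\<pi>\<in>Gd i N n. S n \<pi>) \<in> sets P" for i N n
    using finGd S_meas unfolding Gd_def by (intro sets.finite_UN) auto
  have C_meas: "C i N n \<in> sets P" for i N n unfolding C_def using UGd_meas by auto
  have C_bound: "measure P (C i N n) \<le> \<epsilon>"
    if bd: "\<forall>a b i. (\<Sum>\<pi>\<in>{\<pi>. \<pi> permutes {a..b}}. of_bool (\<not> goodp i N \<pi>) * mallows_prob q {a..b} \<pi>) \<le> \<epsilon>" for i N n \<epsilon>
  proof -
    let ?P = "{\<pi>. \<pi> permutes In n}"
    have disj: "disjoint_family_on (S n) (Gd i N n)" unfolding disjoint_family_on_def S_def by auto
    have "measure P (\<Union>\<pi>\<in>Gd i N n. S n \<pi>) = (\<Sum>\<pi>\<in>Gd i N n. measure P (S n \<pi>))"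
      by (rule finite_measure_finite_Union[OF finGd _ disj]) (use S_meas in \<open>auto simp: Gd_def\<close>)
    also have "\<dots> = (\<Sum>\<pi>\<in>Gd i N n. mallows_prob q (In n) \<pi>)"
      by (intro sum.cong refl) (auto simp: Gd_def S_def In_def intro!: marg)
    also have "\<dots> = (\<Sum>\<pi>\<in>?P. of_bool (goodp i N \<pi>) * mallows_prob q (In n) \<pi>)"
    proof -
      have "finite ?P" by (auto simp: finite_permutations In_def)
      have g: "Gd i N n = {\<pi>\<in>?P. goodp i N \<pi>}" unfolding Gd_def by auto
      have "(\<Sum>\<pi>\<in>{\<pi>\<in>?P. goodp i N \<pi>}. mallows_prob q (In n) \<pi>) = (\<Sum>\<pi>\<in>?P. if goodp i N \<pi> then mallows_prob q (In n) \<pi> else 0)"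
        by (rule sum.inter_filter) fact
      also have "\<dots> = (\<Sum>\<pi>\<in>?P. of_bool (goodp i N \<pi>) * mallows_prob q (In n) \<pi>)"
        by (intro sum.cong refl) auto
      finally show ?thesis unfolding g .
    qed
    finally have u: "measure P (\<Union>\<pi>\<in>Gd i N n. S n \<pi>) = (\<Sum>\<pi>\<in>?P. of_bool (goodp i N \<pi>) * mallows_prob q (In n) \<pi>)" .
    have one: "(\<Sum>\<pi>\<in>?P. mallows_prob q (In n) \<pi>) = 1"
      using mallows_transfer[OF q(1), of "\<lambda>_. True" "- int n" "int n"] PrG_True[OF wok_a[OF q(1)]]
      unfolding In_def by simp
    have split: "(\<Sum>\<pi>\<in>?P. of_bool (goodp i N \<pi>) * mallows_prob q (In n) \<pi>) +
          (\<Sum>\<pi>\<in>?P. of_bool (\<not> goodp i N \<pi>) * mallows_prob q (In n) \<pi>) = (\<Sum>\<pi>\<in>?P. mallows_prob q (In n) \<pi>)"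
      by (subst sum.distrib[symmetric]) (intro sum.cong, auto)
    have b2: "(\<Sum>\<pi>\<in>?P. of_bool (\<not> goodp i N \<pi>) * mallows_prob q (In n) \<pi>) \<le> \<epsilon>"
      using bd unfolding In_def by blast
    have "measure P (C i N n) = 1 - measure P (\<Union>\<pi>\<in>Gd i N n. S n \<pi>)"
      unfolding C_def by (rule prob_compl[OF UGd_meas])
    then show ?thesis using u one split b2 by linarith
  qed
  define E where "E i N n0 = (\<Inter>n. C i N (n0 + n))" for i N n0
  define D where "D i N = (\<Union>n0. E i N n0)" for i N
  have E_meas: "E i N n0 \<in> sets P" for i N n0 unfolding E_def using C_meas by auto
  have D_meas: "D i N \<in> sets P" for i N unfolding D_def using E_meas by auto
  have D_bound: "measure P (D i N) \<le> \<epsilon>"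
    if bd: "\<forall>a b i. (\<Sum>\<pi>\<in>{\<pi>. \<pi> permutes {a..b}}. of_bool (\<not> goodp i N \<pi>) * mallows_prob q {a..b} \<pi>) \<le> \<epsilon>" for i N \<epsilon>
  proof -
    have inc: "incseq (E i N)"
      unfolding incseq_def E_def
    proof (intro allI impI subsetI)
      fix m n :: nat and x assume mn: "m \<le> n" and x: "x \<in> (\<Inter>k. C i N (m + k))"
      show "x \<in> (\<Inter>k. C i N (n + k))"
      proof
        fix k
        have "x \<in> C i N (m + (n - m + k))" using x by blast
        then show "x \<in> C i N (n + k)" using mn by simp
      qed
    qed
    have lim: "(\<lambda>n0. measure P (E i N n0)) \<longlonglongrightarrow> measure P (D i N)"
    proof -
      have "range (E i N) \<subseteq> sets P" using E_meas by blast
      then show ?thesis unfolding D_def by (rule finite_Lim_measure_incseq[OF _ inc])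
    qed
    have "measure P (E i N n0) \<le> \<epsilon>" for n0
    proof -
      have "E i N n0 \<subseteq> C i N n0" unfolding E_def using INT_lower[of 0 UNIV "\<lambda>n. C i N (n0 + n)"] by simp
      then have "measure P (E i N n0) \<le> measure P (C i N n0)"
        by (intro finite_measure_mono C_meas)
      then show ?thesis using C_bound[OF bd] by (meson order_trans)
    qed
    then show ?thesis using LIMSEQ_le_const2[OF lim] by blast
  qed
  define Nk where "Nk k = (SOME N. \<forall>a b i. (\<Sum>\<pi>\<in>{\<pi>. \<pi> permutes {a..b}}. of_bool (\<not> goodp i N \<pi>) * mallows_prob q {a..b} \<pi>) \<le> 1 / (real k + 1))" for k :: nat
  have Nk: "\<forall>a b i. (\<Sum>\<pi>\<in>{\<pi>. \<pi> permutes {a..b}}. of_bool (\<not> goodp i (Nk k) \<pi>) * mallows_prob q {a..b} \<pi>) \<le> 1 / (real k + 1)" for k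
  proof -
    have "\<exists>N. \<forall>a b i. (\<Sum>\<pi>\<in>{\<pi>. \<pi> permutes {a..b}}. of_bool (\<not> goodp i N \<pi>) * mallows_prob q {a..b} \<pi>) \<le> 1 / (real k + 1)"
      by (rule finite_bad) (use q in auto)
    then show ?thesis unfolding Nk_def by (rule someI_ex)
  qed
  define F where "F i = (\<Inter>k. D i (Nk k))" for i
  have F_null: "F i \<in> null_sets P" for i
  proof -
    have Fm: "F i \<in> sets P" unfolding F_def using D_meas by auto
    have "measure P (F i) \<le> 1 / (real k + 1)" for k
    proof -
      have "F i \<subseteq> D i (Nk k)" unfolding F_def by auto
      then have "measure P (F i) \<le> measure P (D i (Nk k))" by (intro finite_measure_mono D_meas)
      then show ?thesis using D_bound[OF Nk[of k]] order_trans by blast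
    qed
    then have "measure P (F i) = 0" by (intro real_le_all_inv) auto
    then show ?thesis using Fm by (simp add: null_sets_def emeasure_eq_measure)
  qed
  have NN: "(\<Union>i\<in>UNIV. F i) \<in> null_sets P"
    by (rule null_sets_UN') (use F_null in auto)
  show ?thesis
    using AE_not_in[OF NN] AE_space bijAE convAE
  proof eventually_elim
    fix \<sigma> assume nin: "\<sigma> \<notin> (\<Union>i\<in>UNIV. F i)" and sp: "\<sigma> \<in> space P" and bj: "bij \<sigma>"
      and cv: "\<forall>i. \<exists>N::nat. \<forall>n\<ge>N. pattern \<sigma> {- int n..int n} i = \<sigma> i"
    show "\<forall>i. finite (orbit_Z \<sigma> i)"
    proof (rule ccontr)
      assume "\<not> (\<forall>i. finite (orbit_Z \<sigma> i))"
      then obtain i where inf: "\<not> finite (orbit_Z \<sigma> i)" by auto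
      have inD: "\<sigma> \<in> D i N" for N
      proof -
        define F0 where "F0 = {i - int N..i + int N}"
        have ev: "eventually (\<lambda>n. \<forall>x\<in>F0. pattern \<sigma> (In n) x = \<sigma> x) sequentially"
        proof (rule eventually_ball_finite)
          show "finite F0" unfolding F0_def by simp
          show "\<forall>x\<in>F0. eventually (\<lambda>n. pattern \<sigma> (In n) x = \<sigma> x) sequentially"
            using cv unfolding In_def eventually_sequentially by blast
        qed
        then obtain n0 where n0: "\<And>n. n \<ge> n0 \<Longrightarrow> \<forall>x\<in>F0. pattern \<sigma> (In n) x = \<sigma> x"
          unfolding eventually_sequentially by blast
        have "\<sigma> \<in> C i N (n0 + n)" for n
        proof -
          have "\<sigma> \<notin> S (n0 + n) \<pi>" if gd: "\<pi> \<in> Gd i N (n0 + n)" for \<pi>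
          proof
            assume "\<sigma> \<in> S (n0 + n) \<pi>"
            then have pat: "pattern \<sigma> (In (n0 + n)) = \<pi>" unfolding S_def by simp
            obtain m k where mk: "i - int N \<le> m" "m \<le> i" "i \<le> k" "k \<le> i + int N" "\<pi> ` {m..k} \<subseteq> {m..k}"
              using gd unfolding Gd_def goodp_def by blast
            have inv_mk: "\<sigma> ` {m..k} \<subseteq> {m..k}"
            proof
              fix y assume "y \<in> \<sigma> ` {m..k}"
              then obtain x where x: "x \<in> {m..k}" "y = \<sigma> x" by auto
              have "x \<in> F0" using x mk unfolding F0_def by auto
              then have "\<sigma> x = \<pi> x" using n0[of "n0 + n"] pat by auto
              moreover have "\<pi> x \<in> {m..k}" using x mk(5) by blast
              ultimately show "y \<in> {m..k}" using x by simp
            qed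
            have "finite (orbit_Z \<sigma> i)" by (rule orbit_finite[OF bj finite_atLeastAtMost inv_mk]) (use mk in auto)
            then show False using inf by simp
          qed
          then show ?thesis unfolding C_def using sp by auto
        qed
        then have "\<sigma> \<in> E i N n0" unfolding E_def by auto
        then show ?thesis unfolding D_def by auto
      qed
      then have "\<sigma> \<in> F i" unfolding F_def by auto
      then show False using nin by auto
    qed
  qed
qed


theorem lemma5p2:
  fixes q :: real and P :: "(int \<Rightarrow> int) measure"
  assumes "0 < q" and "q < 1" and "mallows_Z q P"
  shows "AE \<sigma> in P. \<forall>i. finite (orbit_Z \<sigma> i)"
  using main_thm[OF assms] .

end
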